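(* Assume the Continuum Hypothesis. Then there is a subspace $X$ of $\mathbb{R}$ which is a Baire space and such that \textsc{Bob} has no winning strategy in $\mathsf{BM}_\mathrm{fin}(X)$.
   Context: A Baire space is a space in which countable intersections of dense open sets are dense. The game $\mathsf{BM}_\mathrm{fin}(X)$: \textsc{Alice} plays a non-empty open set $A_0$; \textsc{Bob} plays a finite collection $\mathcal{B}_0$ of non-empty open subsets of $A_0$; in inning $n+1$, for each $B \in \mathcal{B}_n$ \textsc{Alice} plays a non-empty open set $A_B \subseteq B$, letting $\mathcal{A}_{n+1}=\{A_B : B\in\mathcal{B}_n\}$, and \textsc{Bob} plays a finite collection $\mathcal{B}_{n+1}$ of non-empty open subsets of $\bigcup\mathcal{A}_{n+1}$; \textsc{Bob} wins if $\bigcap_{n}\bigcup\mathcal{B}_n\neq\emptyset$, otherwise \textsc{Alice} wins. *)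

theory Defs
  imports "HOL-Analysis.Analysis" "HOL-Library.Equipollence"
begin

definition continuum_hypothesis :: bool where
  "continuum_hypothesis \<longleftrightarrow>
     (\<forall>A :: real set. countable A \<or> A \<approx> (UNIV :: real set))"

definition baire_space :: "'a topology \<Rightarrow> bool" where
  "baire_space T \<longleftrightarrow>
     (\<forall>U :: nat \<Rightarrow> 'a set.
        (\<forall>n. openin T (U n) \<and> T closure_of (U n) = topspace T)
        \<longrightarrow> T closure_of (topspace T \<inter> (\<Inter>n. U n)) = topspace T)"

text \<open>Alice's move in inning n is a function a n :: real set => real set, giving for each
  B in the previous Bob collection (for inning 0 the virtual collection {X}) the set A_B;
  outside the previous collection it is required to be empty.\<close>

type_synonym alice_move = "real set \<Rightarrow> real set"
type_synonym bob_strategy = "alice_move list \<Rightarrow> real set set"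

definition bob_coll :: "bob_strategy \<Rightarrow> (nat \<Rightarrow> alice_move) \<Rightarrow> nat \<Rightarrow> real set set" where
  "bob_coll \<sigma> a n = \<sigma> (map a [0..<Suc n])"

definition prev_coll :: "real set \<Rightarrow> bob_strategy \<Rightarrow> (nat \<Rightarrow> alice_move) \<Rightarrow> nat \<Rightarrow> real set set" where
  "prev_coll X \<sigma> a n = (if n = 0 then {X} else bob_coll \<sigma> a (n - 1))"

definition alice_legal :: "real set \<Rightarrow> bob_strategy \<Rightarrow> (nat \<Rightarrow> alice_move) \<Rightarrow> nat \<Rightarrow> bool" where
  "alice_legal X \<sigma> a n \<longleftrightarrow>
     (\<forall>B. (B \<in> prev_coll X \<sigma> a n \<longrightarrow>
            a n B \<noteq> {} \<and> a n B \<subseteq> B \<and> openin (top_of_set X) (a n B)) \<and>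
          (B \<notin> prev_coll X \<sigma> a n \<longrightarrow> a n B = {}))"

definition bob_legal :: "real set \<Rightarrow> bob_strategy \<Rightarrow> (nat \<Rightarrow> alice_move) \<Rightarrow> nat \<Rightarrow> bool" where
  "bob_legal X \<sigma> a n \<longleftrightarrow>
     finite (bob_coll \<sigma> a n) \<and>
     (\<forall>B \<in> bob_coll \<sigma> a n. B \<noteq> {} \<and> openin (top_of_set X) B \<and>
          B \<subseteq> \<Union> (a n ` prev_coll X \<sigma> a n))"

definition bob_winning_strategy_BMfin :: "real set \<Rightarrow> bob_strategy \<Rightarrow> bool" where
  "bob_winning_strategy_BMfin X \<sigma> \<longleftrightarrow>
     (\<forall>a. (\<forall>n. (\<forall>m\<le>n. alice_legal X \<sigma> a m) \<longrightarrow> bob_legal X \<sigma> a n) \<and>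
          ((\<forall>n. alice_legal X \<sigma> a n) \<longrightarrow> (\<Inter>n. \<Union> (bob_coll \<sigma> a n)) \<noteq> {}))"

end

theory Submission
  imports Defs
begin

definition ivl :: "rat \<times> rat \<Rightarrow> real set" where
  "ivl J = {real_of_rat (fst J) <..< real_of_rat (snd J)}"
definition civl :: "rat \<times> rat \<Rightarrow> real set" where
  "civl J = {real_of_rat (fst J) .. real_of_rat (snd J)}"

lemma ivl_sub_civl: "ivl J \<subseteq> civl J"
  unfolding ivl_def civl_def by auto

lemma open_ivl[simp]: "open (ivl J)" unfolding ivl_def by auto
lemma closed_civl[simp]: "closed (civl J)" unfolding civl_def by auto

lemma ivl_ne: "fst J < snd J \<Longrightarrow> ivl J \<noteq> {}"
  unfolding ivl_def by (simp add: of_rat_less_eq not_le)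

lemma rat_between: "(a::real) < b \<Longrightarrow> \<exists>q. a < real_of_rat q \<and> real_of_rat q < b"
  using Rats_dense_in_real by (metis Rats_cases)

lemma rat_ivl_avoid:
  assumes "open U" "x \<in> U"
  shows "\<exists>J. fst J < snd J \<and> civl J \<subseteq> U \<and> e \<notin> civl J"
proof -
  obtain d where d: "d > 0" "ball x d \<subseteq> U" using assms openE by blast
  obtain q1 where q1: "x < real_of_rat q1" "real_of_rat q1 < x + d" using rat_between[of x "x+d"] d by auto
  obtain q2 where q2: "real_of_rat q1 < real_of_rat q2" "real_of_rat q2 < x + d" using rat_between q1 by blast
  obtain q3 where q3: "real_of_rat q2 < real_of_rat q3" "real_of_rat q3 < x + d" using rat_between q2 by blast
  obtain q4 where q4: "real_of_rat q3 < real_of_rat q4" "real_of_rat q4 < x + d" using rat_between q3 by blast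
  have s1: "civl (q1,q2) \<subseteq> U" using d q1 q2 q3 q4 unfolding civl_def ball_def dist_real_def by auto
  have s2: "civl (q3,q4) \<subseteq> U" using d q1 q2 q3 q4 unfolding civl_def ball_def dist_real_def by auto
  show ?thesis
  proof (cases "e \<in> civl (q1,q2)")
    case True
    then have "e \<notin> civl (q3,q4)" using q3 unfolding civl_def by auto
    then show ?thesis using s2 q4 by (intro exI[of _ "(q3,q4)"]) (auto simp: of_rat_less)
  next
    case False
    then show ?thesis using s1 q2 by (intro exI[of _ "(q1,q2)"]) (auto simp: of_rat_less)
  qed
qed

lemma open_rat_union:
  assumes "open S"
  shows "S = \<Union>{ivl J | J. fst J < snd J \<and> ivl J \<subseteq> S}"
proof
  show "S \<subseteq> \<Union>{ivl J | J. fst J < snd J \<and> ivl J \<subseteq> S}"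
  proof
    fix x assume "x \<in> S"
    obtain d where d: "d > 0" "ball x d \<subseteq> S" using assms openE \<open>x\<in>S\<close> by blast
    obtain a where a: "x - d < real_of_rat a" "real_of_rat a < x" using rat_between[of "x-d" x] d by auto
    obtain b where b: "x < real_of_rat b" "real_of_rat b < x + d" using rat_between[of x "x+d"] d by auto
    have "ivl (a,b) \<subseteq> ball x d" using a b unfolding ivl_def ball_def dist_real_def by (auto simp: abs_if)
    then have "ivl (a,b) \<subseteq> S" using d by auto
    moreover have "real_of_rat a < real_of_rat b" using a b by linarith
    then have "a < b" by (simp add: of_rat_less)
    moreover have "x \<in> ivl (a,b)" using a b unfolding ivl_def by auto
    ultimately show "x \<in> \<Union>{ivl J | J. fst J < snd J \<and> ivl J \<subseteq> S}" by fastforce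
  qed
qed auto

lemma nowhere_dense_no_rats:
  fixes K :: "real set"
  assumes "K \<inter> \<rat> = {}"
  shows "closure (- K) = UNIV"
proof -
  have "interior K = {}"
  proof (rule ccontr)
    assume "interior K \<noteq> {}"
    then obtain x where "x \<in> interior K" by auto
    then obtain d where d: "d > 0" "ball x d \<subseteq> K"
      by (meson open_contains_ball_eq open_interior interior_subset subset_trans)
    obtain q where "x < real_of_rat q" "real_of_rat q < x + d" using rat_between[of x "x+d"] d by auto
    then have "real_of_rat q \<in> K" using d unfolding ball_def dist_real_def by auto
    then show False using assms by auto
  qed
  then show ?thesis by (simp add: closure_complement)
qed

lemma omega1_order:
  assumes "continuum_hypothesis"
  shows "\<exists>R::(real\<times>real) set. wf R \<and> (\<forall>y z. y \<noteq> z \<longrightarrow> (y,z) \<in> R \<or> (z,y) \<in> R)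
            \<and> (\<forall>y. countable {z. (z,y) \<in> R})"
proof -
  obtain r :: "real rel" where r: "Well_order r" "Field r = UNIV" using well_ordering by metis
  define S where "S = r - Id"
  have wfS: "wf S" using r(1) unfolding S_def by (simp add: well_order_on_def)
  have "total_on UNIV r" using r unfolding well_order_on_def linear_order_on_def by metis
  then have tot: "\<forall>y z. y \<noteq> z \<longrightarrow> (y,z) \<in> S \<or> (z,y) \<in> S"
    unfolding S_def total_on_def by blast
  show ?thesis
  proof (cases "\<forall>y. countable {z. (z,y) \<in> S}")
    case True thus ?thesis using wfS tot by (intro exI[of _ S]) simp
  next
    case False
    then obtain y1 where "y1 \<in> {y. uncountable {z. (z,y)\<in>S}}" by blast
    from wfE_min[OF wfS this] obtain y0 where y0: "y0 \<in> {y. uncountable {z. (z,y)\<in>S}}"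
      and mn: "\<And>y. (y,y0)\<in>S \<Longrightarrow> y \<notin> {y. uncountable {z. (z,y)\<in>S}}" by blast
    define A where "A = {z. (z,y0)\<in>S}"
    have "uncountable A" using y0 unfolding A_def by simp
    then have "A \<approx> (UNIV::real set)" using assms unfolding continuum_hypothesis_def by blast
    then obtain \<psi> where psi: "bij_betw \<psi> A (UNIV::real set)" unfolding eqpoll_def by blast
    define \<phi> where "\<phi> = inv_into A \<psi>"
    have phi: "bij_betw \<phi> (UNIV::real set) A" unfolding \<phi>_def using bij_betw_inv_into[OF psi] .
    define R where "R = inv_image S \<phi>"
    have "wf R" unfolding R_def using wfS by auto
    moreover have "\<forall>y z. y \<noteq> z \<longrightarrow> (y,z) \<in> R \<or> (z,y) \<in> R"
    proof (intro allI impI)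
      fix y z :: real assume "y \<noteq> z"
      then have "\<phi> y \<noteq> \<phi> z" using phi unfolding bij_betw_def inj_on_def by auto
      then show "(y,z) \<in> R \<or> (z,y) \<in> R" using tot unfolding R_def by auto
    qed
    moreover have "\<forall>y. countable {z. (z,y) \<in> R}"
    proof
      fix y
      have "\<phi> y \<in> A" using phi unfolding bij_betw_def by auto
      then have c: "countable {z. (z, \<phi> y)\<in>S}" using mn unfolding A_def by auto
      have "\<phi> ` {z. (z,y) \<in> R} \<subseteq> {z. (z, \<phi> y)\<in>S}" unfolding R_def by auto
      then have "countable (\<phi> ` {z. (z,y) \<in> R})" using c countable_subset by blast
      moreover have "inj_on \<phi> {z. (z,y) \<in> R}" using phi unfolding bij_betw_def inj_on_def by auto
      ultimately show "countable {z. (z,y) \<in> R}" using countable_image_inj_on by blast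
    qed
    ultimately show ?thesis by (intro exI[of _ R]) simp
  qed
qed

type_synonym scode = "((rat \<times> rat) list list \<times> nat \<times> (rat \<times> rat) option)"
type_synonym bcode = "(nat \<times> (rat \<times> rat)) + (rat \<times> rat)"
type_synonym task = "(scode + bcode) set"

lemma task_surj: "\<exists>g::real \<Rightarrow> task. surj g"
proof -
  obtain f :: "nat set \<Rightarrow> real" where f: "bij_betw f UNIV UNIV"
    using nat_sets_eqpoll_reals unfolding eqpoll_def by blast
  define h where "h = inv f"
  have "surj h" unfolding h_def using f by (simp add: bij_betw_def inj_imp_surj_inv)
  define g where "g = (\<lambda>y. (from_nat :: nat \<Rightarrow> scode + bcode) ` h y)"
  have "surj g"
  proof -
    { fix T :: task
      obtain y where "h y = to_nat ` T" using \<open>surj h\<close> by (metis surjD)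
      then have "g y = T" unfolding g_def by (simp add: image_image)
      then have "T \<in> range g" by auto }
    then show ?thesis by auto
  qed
  then show ?thesis by blast
qed

definition mcnt :: "scode set \<Rightarrow> (rat\<times>rat) list list \<Rightarrow> nat" where
  "mcnt t p = card {i. (p,i,None) \<in> t}"
definition goodJ :: "scode set \<Rightarrow> (rat\<times>rat) list list \<Rightarrow> nat \<Rightarrow> real \<Rightarrow> rat\<times>rat \<Rightarrow> bool" where
  "goodJ t p i x J \<longleftrightarrow> (p,i,Some J) \<in> t \<and> fst J < snd J \<and> x \<notin> civl J"
definition choice :: "scode set \<Rightarrow> real \<Rightarrow> (rat\<times>rat) list list \<Rightarrow> (rat\<times>rat) list" where
  "choice t x p = map (\<lambda>i. SOME J. goodJ t p i x J) [0..<mcnt t p]"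
primrec cpos :: "scode set \<Rightarrow> (nat \<Rightarrow> real) \<Rightarrow> nat \<Rightarrow> (rat\<times>rat) list list" where
  "cpos t e 0 = []"
| "cpos t e (Suc n) = choice t (e n) (cpos t e n) # cpos t e n"
definition Kset :: "scode set \<Rightarrow> (nat \<Rightarrow> real) \<Rightarrow> real set" where
  "Kset t e = (\<Inter>n. \<Union>{civl J | J. J \<in> set (choice t (e n) (cpos t e n)) \<and> e n \<notin> civl J})"

lemma closed_Kset: "closed (Kset t e)"
proof -
  have "closed (\<Union>{civl J | J. J \<in> set (choice t (e n) (cpos t e n)) \<and> e n \<notin> civl J})" for n
  proof (rule closed_Union)
    have "{civl J | J. J \<in> set (choice t (e n) (cpos t e n)) \<and> e n \<notin> civl J}
          \<subseteq> civl ` set (choice t (e n) (cpos t e n))" by auto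
    then show "finite {civl J | J. J \<in> set (choice t (e n) (cpos t e n)) \<and> e n \<notin> civl J}"
      using finite_subset by blast
  qed auto
  then show ?thesis unfolding Kset_def by auto
qed

lemma Kset_avoid: "Kset t e \<inter> range e = {}"
  unfolding Kset_def by blast

definition bdecV :: "bcode set \<Rightarrow> real set" where
  "bdecV b = \<Union>{ivl J | J. Inr J \<in> b}"
definition bdecO :: "bcode set \<Rightarrow> nat \<Rightarrow> real set" where
  "bdecO b n = \<Union>{ivl J | J. Inl (n,J) \<in> b}"
definition stask :: "task \<Rightarrow> scode set" where "stask T = {c. Inl c \<in> T}"
definition btask :: "task \<Rightarrow> bcode set" where "btask T = {c. Inr c \<in> T}"

lemma open_bdecV: "open (bdecV b)" unfolding bdecV_def by auto
lemma open_bdecO: "open (bdecO b n)" unfolding bdecO_def by auto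

lemma baire_pick:
  fixes \<G> :: "real set set"
  assumes "countable \<G>" "\<forall>T\<in>\<G>. open T \<and> closure T = UNIV" "open V" "V \<noteq> {}"
  shows "V \<inter> \<Inter>\<G> \<noteq> {}"
proof -
  have "UNIV \<subseteq> closure (\<Inter>\<G>)"
    using Baire[of UNIV \<G>] assms by auto
  then have "closure (\<Inter>\<G>) = UNIV" by auto
  then show ?thesis using assms(3,4) open_Int_closure_eq_empty by (metis inf_top.right_neutral)
qed

definition Pset :: "(real\<times>real) set \<Rightarrow> (real \<Rightarrow> real \<times> real set) \<Rightarrow> real \<Rightarrow> real set" where
  "Pset R g y = (\<lambda>z. fst (g z)) ` {z. (z,y) \<in> R}"
definition Kprev :: "(real\<times>real) set \<Rightarrow> (real \<Rightarrow> real \<times> real set) \<Rightarrow> real \<Rightarrow> real set set" where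
  "Kprev R g y = (\<lambda>z. snd (g z)) ` {z. (z,y) \<in> R}"
definition eseq :: "(real\<times>real) set \<Rightarrow> (real \<Rightarrow> real \<times> real set) \<Rightarrow> real \<Rightarrow> nat \<Rightarrow> real" where
  "eseq R g y = from_nat_into (Pset R g y \<union> \<rat>)"

definition step :: "(real\<times>real) set \<Rightarrow> (real \<Rightarrow> task) \<Rightarrow> (real \<Rightarrow> real \<times> real set) \<Rightarrow> real \<Rightarrow> real \<times> real set" where
  "step R tk g y = (let K = Kset (stask (tk y)) (eseq R g y);
       G = - (K \<union> \<Union>(Kprev R g y));
       V = bdecV (btask (tk y)); W = bdecO (btask (tk y)) in
     (if \<exists>x. x \<in> G \<inter> V \<inter> \<Inter>(range W) then (SOME x. x \<in> G \<inter> V \<inter> \<Inter>(range W)) else (SOME x. x \<in> G), K))"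

lemma step_cut:
  fixes R :: "(real\<times>real) set" and g :: "real \<Rightarrow> real \<times> real set"
  shows "step R tk (cut g R y) y = step R tk g y"
proof -
  have "Pset R (cut g R y) y = Pset R g y" unfolding Pset_def by (auto simp: cut_apply)
  moreover have "Kprev R (cut g R y) y = Kprev R g y" unfolding Kprev_def by (auto simp: cut_apply)
  ultimately show ?thesis unfolding step_def eseq_def by simp
qed

lemma construction:
  fixes R :: "(real\<times>real) set" and tk :: "real \<Rightarrow> task"
  assumes wfR: "wf R" and tot: "\<forall>y z. y \<noteq> z \<longrightarrow> (y,z) \<in> R \<or> (z,y) \<in> R"
    and cnt: "\<forall>y. countable {z. (z,y) \<in> R}" and tk: "surj tk"
  shows "\<exists>X::real set. (\<forall>V (W::nat \<Rightarrow> real set). open V \<and> V \<noteq> {} \<and> (\<forall>n. open (W n) \<and> closure (W n) = UNIV)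
              \<longrightarrow> X \<inter> V \<inter> \<Inter>(range W) \<noteq> {})
           \<and> (\<forall>t. \<exists>e. X \<inter> Kset t e = {})"
proof -
  define f where "f = wfrec R (step R tk)"
  have fy: "f y = step R tk f y" for y
    unfolding f_def by (subst wfrec[OF wfR]) (simp add: step_cut)
  define X where "X = range (\<lambda>y. fst (f y))"
  define e where "e y = eseq R f y" for y
  have rng_e: "range (e y) = Pset R f y \<union> \<rat>" for y
  proof -
    have "countable (Pset R f y)" unfolding Pset_def using cnt by auto
    then have "countable (Pset R f y \<union> \<rat>)" using countable_rat by auto
    moreover have "Pset R f y \<union> \<rat> \<noteq> {}" by auto
    ultimately show ?thesis unfolding e_def eseq_def by simp
  qed
  have K: "snd (f y) = Kset (stask (tk y)) (e y)" for y
    by (subst fy) (simp add: step_def Let_def e_def)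
  have Kcl: "closed (snd (f y))" for y using K closed_Kset by simp
  have Kdense: "open (- snd (f y)) \<and> closure (- snd (f y)) = UNIV" for y
  proof -
    have "snd (f y) \<inter> range (e y) = {}" using Kset_avoid[of _ "e y"] K[of y] by simp
    then have "snd (f y) \<inter> \<rat> = {}" unfolding rng_e by blast
    then have "closure (- snd (f y)) = UNIV" by (rule nowhere_dense_no_rats)
    moreover have "open (- snd (f y))" using Kcl[of y] by (simp add: open_Compl)
    ultimately show ?thesis by blast
  qed
  have Kprevx: "fst (f z) \<notin> snd (f y)" if "(z,y) \<in> R" for z y
  proof -
    have "fst (f z) \<in> Pset R f y" using that unfolding Pset_def by blast
    then have "fst (f z) \<in> range (e y)" unfolding rng_e by blast
    then show ?thesis using Kset_avoid[of _ "e y"] K[of y] by auto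
  qed
  define \<G> where "\<G> y = uminus ` (insert (snd (f y)) (Kprev R f y))" for y
  have Gc: "countable (\<G> y)" for y unfolding \<G>_def Kprev_def using cnt by auto
  have Gd: "\<forall>T\<in>\<G> y. open T \<and> closure T = UNIV" for y
    unfolding \<G>_def Kprev_def using Kdense by auto
  have xG: "fst (f y) \<in> \<Inter>(\<G> y)
     \<and> (bdecV (btask (tk y)) \<noteq> {} \<and> (\<forall>n. closure (bdecO (btask (tk y)) n) = UNIV)
         \<longrightarrow> fst (f y) \<in> bdecV (btask (tk y)) \<inter> \<Inter>(range (bdecO (btask (tk y)))))" for y
  proof -
    define G where "G = - (Kset (stask (tk y)) (e y) \<union> \<Union>(Kprev R f y))"
    have GG: "G = \<Inter>(\<G> y)" unfolding G_def \<G>_def K[symmetric] by auto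
    define V where "V = bdecV (btask (tk y))"
    define W where "W = bdecO (btask (tk y))"
    have fx: "fst (f y) = (if \<exists>x. x \<in> G \<inter> V \<inter> \<Inter>(range W) then (SOME x. x \<in> G \<inter> V \<inter> \<Inter>(range W)) else (SOME x. x \<in> G))"
      unfolding G_def V_def W_def e_def by (subst fy) (simp only: step_def Let_def fst_conv)
    have "UNIV \<inter> \<Inter>(\<G> y) \<noteq> {}" using baire_pick[OF Gc Gd] by auto
    then have Gne: "\<exists>x. x \<in> G" using GG by auto
    show ?thesis
    proof (cases "\<exists>x. x \<in> G \<inter> V \<inter> \<Inter>(range W)")
      case True
      have s: "(SOME x. x \<in> G \<inter> V \<inter> \<Inter>(range W)) \<in> G \<inter> V \<inter> \<Inter>(range W)"
        using True by (rule someI_ex)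
      have "fst (f y) = (SOME x. x \<in> G \<inter> V \<inter> \<Inter>(range W))" by (simp only: fx if_P[OF True])
      then have "fst (f y) \<in> G \<inter> V \<inter> \<Inter>(range W)" using s by simp
      then show ?thesis using GG unfolding V_def W_def by auto
    next
      case False
      have s: "(SOME x. x \<in> G) \<in> G" using Gne by (rule someI_ex)
      have "fst (f y) = (SOME x. x \<in> G)" by (simp only: fx if_not_P[OF False])
      then have "fst (f y) \<in> G" using s by simp
      moreover have "\<not> (V \<noteq> {} \<and> (\<forall>n. closure (W n) = UNIV))"
      proof
        assume a: "V \<noteq> {} \<and> (\<forall>n. closure (W n) = UNIV)"
        have "countable (\<G> y \<union> range W)" using Gc by auto
        moreover have "\<forall>T\<in>\<G> y \<union> range W. open T \<and> closure T = UNIV"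
          using Gd a unfolding W_def by (auto simp: open_bdecO)
        ultimately have "V \<inter> \<Inter>(\<G> y \<union> range W) \<noteq> {}"
          using baire_pick a unfolding V_def by (metis open_bdecV)
        then show False using False GG by auto
      qed
      ultimately show ?thesis using GG unfolding V_def W_def by auto
    qed
  qed
  have XK: "X \<inter> snd (f y) = {}" for y
  proof -
    { fix z assume z: "fst (f z) \<in> snd (f y)"
      have False
      proof (cases "z = y")
        case True then show False using xG[of y] z unfolding \<G>_def by auto
      next
        case False
        then consider "(z,y) \<in> R" | "(y,z) \<in> R" using tot by blast
        then show False
        proof cases
          case 1 then show False using Kprevx z by blast
        next
          case 2 then show False using xG[of z] z unfolding \<G>_def Kprev_def by auto
        qed
      qed }
    then show ?thesis unfolding X_def by auto
  qed
  have P2: "\<forall>t. \<exists>e. X \<inter> Kset t e = {}"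
  proof
    fix t
    obtain y where "tk y = Inl ` t" using tk by (metis surjD)
    then have "stask (tk y) = t" unfolding stask_def by auto
    then show "\<exists>e. X \<inter> Kset t e = {}" using XK[of y] K[of y] by auto
  qed
  have P1: "X \<inter> V \<inter> \<Inter>(range W) \<noteq> {}"
    if V: "open V" "V \<noteq> {}" and W: "\<forall>n. open (W n) \<and> closure (W n) = UNIV" for V :: "real set" and W :: "nat \<Rightarrow> real set"
  proof -
    define b :: "bcode set" where "b = Inr ` {J. fst J < snd J \<and> ivl J \<subseteq> V}
         \<union> Inl ` {p. fst (snd p) < snd (snd p) \<and> ivl (snd p) \<subseteq> W (fst p)}"
    obtain y where y: "tk y = Inr ` b" using tk by (metis surjD)
    then have bt: "btask (tk y) = b" unfolding btask_def by auto
    have mr: "Inr J \<in> b \<longleftrightarrow> fst J < snd J \<and> ivl J \<subseteq> V" for J unfolding b_def by auto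
    have ml: "Inl (n,J) \<in> b \<longleftrightarrow> fst J < snd J \<and> ivl J \<subseteq> W n" for n J unfolding b_def by (auto simp: image_iff)
    have "bdecV b = \<Union>{ivl J | J. fst J < snd J \<and> ivl J \<subseteq> V}"
      unfolding bdecV_def mr by simp
    then have bV: "bdecV b = V" using open_rat_union[OF V(1)] by simp
    have bOn: "bdecO b n = \<Union>{ivl J | J. fst J < snd J \<and> ivl J \<subseteq> W n}" for n
      unfolding bdecO_def ml by simp
    have "bdecO b n = W n" for n using bOn[of n] open_rat_union[of "W n"] W by simp
    then have bO: "bdecO b = W" by (rule ext)
    have "V \<noteq> {} \<and> (\<forall>n. closure (W n) = UNIV)" using V W by simp
    then have "fst (f y) \<in> V \<inter> \<Inter>(range W)" using xG[of y] unfolding bt bV bO by blast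
    moreover have "fst (f y) \<in> X" unfolding X_def by (rule rangeI)
    ultimately show ?thesis by blast
  qed
  have P1': "\<forall>V (W::nat \<Rightarrow> real set). open V \<and> V \<noteq> {} \<and> (\<forall>n. open (W n) \<and> closure (W n) = UNIV)
              \<longrightarrow> X \<inter> V \<inter> \<Inter>(range W) \<noteq> {}"
    using P1 by meson
  show ?thesis by (rule exI[of _ X], rule conjI[OF P1' P2])
qed

lemma baire_part:
  fixes X :: "real set"
  assumes P1: "\<forall>V (W::nat \<Rightarrow> real set). open V \<and> V \<noteq> {} \<and> (\<forall>n. open (W n) \<and> closure (W n) = UNIV)
              \<longrightarrow> X \<inter> V \<inter> \<Inter>(range W) \<noteq> {}"
  shows "baire_space (top_of_set X)"
proof -
  have dense: "X \<inter> V \<noteq> {}" if "open V" "V \<noteq> {}" for V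
    using P1[rule_format, of V "\<lambda>n. UNIV"] that by simp
  have cl: "(top_of_set X) closure_of S = X \<inter> closure (X \<inter> S)" for S
    by (simp add: closure_of_subtopology)
  show ?thesis unfolding baire_space_def
  proof (intro allI impI)
    fix U :: "nat \<Rightarrow> real set"
    assume a: "\<forall>n. openin (top_of_set X) (U n) \<and> (top_of_set X) closure_of (U n) = topspace (top_of_set X)"
    have "\<forall>n. \<exists>T. open T \<and> U n = X \<inter> T"
    proof
      fix n show "\<exists>T. open T \<and> U n = X \<inter> T" using a openin_open[of X "U n"] by simp
    qed
    then obtain W where W: "\<forall>n. open (W n) \<and> U n = X \<inter> W n" by metis
    have Wd: "closure (W n) = UNIV" for n
    proof (rule ccontr)
      assume "closure (W n) \<noteq> UNIV"
      define V where "V = - closure (W n)"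
      have "open V" unfolding V_def by auto
      moreover have "V \<noteq> {}" unfolding V_def using \<open>closure (W n) \<noteq> UNIV\<close> by auto
      ultimately obtain x where x: "x \<in> X" "x \<in> V" using dense by blast
      have "X \<inter> closure (X \<inter> U n) = X" using a cl by simp
      then have "x \<in> closure (X \<inter> U n)" using x by blast
      moreover have "X \<inter> U n \<subseteq> W n" using W by auto
      ultimately have "x \<in> closure (W n)" using closure_mono by blast
      then show False using x V_def by auto
    qed
    have sub: "X \<subseteq> closure (X \<inter> (X \<inter> \<Inter>(range U)))"
    proof
      fix x assume x: "x \<in> X"
      show "x \<in> closure (X \<inter> (X \<inter> \<Inter>(range U)))"
      proof (rule ccontr)
        assume nx: "x \<notin> closure (X \<inter> (X \<inter> \<Inter>(range U)))"
        define V where "V = - closure (X \<inter> (X \<inter> \<Inter>(range U)))"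
        have "open V" "V \<noteq> {}" using nx unfolding V_def by auto
        moreover have "\<forall>n. open (W n) \<and> closure (W n) = UNIV" using W Wd by simp
        ultimately have "X \<inter> V \<inter> \<Inter>(range W) \<noteq> {}" using P1[rule_format, of V W] by simp
        then obtain y where y: "y \<in> X" "y \<in> V" "\<forall>n. y \<in> W n" by blast
        then have "y \<in> X \<inter> (X \<inter> \<Inter>(range U))" using W by auto
        then have "y \<in> closure (X \<inter> (X \<inter> \<Inter>(range U)))" by (rule subsetD[OF closure_subset])
        then show False using y(2) unfolding V_def by blast
      qed
    qed
    then show "(top_of_set X) closure_of (topspace (top_of_set X) \<inter> \<Inter>(range U)) = topspace (top_of_set X)"
      unfolding cl topspace_euclidean_subtopology using sub by blast
  qed
qed

definition Lof :: "real set set \<Rightarrow> real set list" where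
  "Lof c = (SOME l. set l = c \<and> distinct l)"

lemma Lof: "finite c \<Longrightarrow> set (Lof c) = c \<and> distinct (Lof c)"
  unfolding Lof_def using finite_distinct_list[of c] by (metis (mono_tags, lifting) someI_ex)

definition amove :: "real set \<Rightarrow> real set list \<Rightarrow> (rat\<times>rat) list \<Rightarrow> alice_move" where
  "amove X Bl js B = X \<inter> \<Union>{ivl (js!i) | i. i < length Bl \<and> i < length js \<and> Bl!i = B}"

primrec acts :: "real set \<Rightarrow> bob_strategy \<Rightarrow> (rat\<times>rat) list list \<Rightarrow> alice_move list" where
  "acts X \<sigma> [] = []"
| "acts X \<sigma> (j#p) = amove X (if p = [] then [X] else Lof (\<sigma> (rev (acts X \<sigma> p)))) j # acts X \<sigma> p"

definition BLs :: "real set \<Rightarrow> bob_strategy \<Rightarrow> (rat\<times>rat) list list \<Rightarrow> real set list" where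
  "BLs X \<sigma> p = (if p = [] then [X] else Lof (\<sigma> (rev (acts X \<sigma> p))))"

lemma acts_Cons: "acts X \<sigma> (j#p) = amove X (BLs X \<sigma> p) j # acts X \<sigma> p"
  unfolding BLs_def by simp

definition scodeof :: "real set \<Rightarrow> bob_strategy \<Rightarrow> scode set" where
  "scodeof X \<sigma> = {(p,i,None) | p i. i < length (BLs X \<sigma> p)}
     \<union> {(p,i,Some J) | p i J. i < length (BLs X \<sigma> p) \<and> fst J < snd J \<and> X \<inter> ivl J \<subseteq> BLs X \<sigma> p ! i}"

lemma amove_nth:
  assumes "distinct Bl" "i < length Bl" "length js = length Bl"
  shows "amove X Bl js (Bl!i) = X \<inter> ivl (js!i)"
proof -
  have E: "{ivl (js!k) | k. k < length Bl \<and> k < length js \<and> Bl!k = Bl!i} = {ivl (js!i)}"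
    using assms nth_eq_iff_index_eq by fastforce
  show ?thesis unfolding amove_def E by simp
qed

lemma amove_notin:
  assumes "B \<notin> set Bl"
  shows "amove X Bl js B = {}"
proof -
  have E: "{ivl (js!k) | k. k < length Bl \<and> k < length js \<and> Bl!k = B} = {}"
    using assms nth_mem by blast
  show ?thesis unfolding amove_def E by simp
qed

lemma game_part:
  fixes X :: "real set"
  assumes dense: "\<And>V. open V \<Longrightarrow> V \<noteq> {} \<Longrightarrow> X \<inter> V \<noteq> {}"
    and P2: "\<forall>t. \<exists>e. X \<inter> Kset t e = {}"
  shows "\<not> bob_winning_strategy_BMfin X \<sigma>"
proof
  assume win: "bob_winning_strategy_BMfin X \<sigma>"
  define t where "t = scodeof X \<sigma>"
  obtain e where e: "X \<inter> Kset t e = {}" using P2 by blast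
  define cp where "cp n = cpos t e n" for n
  define ch where "ch n = choice t (e n) (cp n)" for n
  define BL where "BL n = BLs X \<sigma> (cp n)" for n
  define a where "a n = amove X (BL n) (ch n)" for n
  have cpS: "cp (Suc n) = ch n # cp n" for n unfolding cp_def ch_def by simp
  have F1: "rev (acts X \<sigma> (cp n)) = map a [0..<n]" for n
  proof (induction n)
    case 0 then show ?case unfolding cp_def by simp
  next
    case (Suc n)
    have "acts X \<sigma> (cp (Suc n)) = a n # acts X \<sigma> (cp n)"
      unfolding cpS acts_Cons a_def BL_def by simp
    then show ?case using Suc by simp
  qed
  have BL0: "BL 0 = [X]" unfolding BL_def cp_def BLs_def by simp
  have BLS: "BL (Suc n) = Lof (bob_coll \<sigma> a n)" for n
  proof -
    have "BL (Suc n) = Lof (\<sigma> (rev (acts X \<sigma> (cp (Suc n)))))" unfolding BL_def BLs_def cpS by simp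
    also have "\<dots> = Lof (\<sigma> (map a [0..<Suc n]))" using F1 by simp
    finally show ?thesis unfolding bob_coll_def .
  qed
  have mc: "mcnt t (cp n) = length (BL n)" for n
  proof -
    have "{i. (cp n, i, None) \<in> t} = {..<length (BL n)}" unfolding t_def scodeof_def BL_def by auto
    then show ?thesis unfolding mcnt_def by simp
  qed
  have lch: "length (ch n) = length (BL n)" for n unfolding ch_def choice_def mc by simp
  have chi: "ch n ! i = (SOME J. goodJ t (cp n) i (e n) J)" if "i < length (BL n)" for n i
    unfolding ch_def choice_def using that mc by simp
  define okB where "okB n \<longleftrightarrow> distinct (BL n) \<and> (\<forall>B\<in>set (BL n). B \<noteq> {} \<and> openin (top_of_set X) B)" for n
  have good: "goodJ t (cp n) i (e n) (ch n ! i)" if ok: "okB n" and i: "i < length (BL n)" for n i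
  proof -
    have B: "BL n ! i \<noteq> {}" "openin (top_of_set X) (BL n ! i)" using ok i nth_mem unfolding okB_def by blast+
    then obtain U where U: "open U" "BL n ! i = X \<inter> U" using openin_open by blast
    then obtain x where "x \<in> U" using B(1) by blast
    then obtain J where J: "fst J < snd J" "civl J \<subseteq> U" "e n \<notin> civl J" using rat_ivl_avoid[OF U(1)] by blast
    have "X \<inter> ivl J \<subseteq> BL n ! i" using J(2) ivl_sub_civl U(2) by blast
    then have "(cp n, i, Some J) \<in> t" using i J(1) unfolding t_def scodeof_def BL_def by blast
    then have "\<exists>J. goodJ t (cp n) i (e n) J" using J unfolding goodJ_def by blast
    then show ?thesis unfolding chi[OF i] by (rule someI_ex)
  qed
  have prev: "prev_coll X \<sigma> a n = set (BL n)" if "n = 0 \<or> finite (bob_coll \<sigma> a (n - 1))" for n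
  proof (cases n)
    case 0 then show ?thesis unfolding prev_coll_def by (simp add: BL0)
  next
    case (Suc m)
    then have "finite (bob_coll \<sigma> a m)" using that by simp
    then show ?thesis unfolding prev_coll_def Suc BLS using Lof by simp
  qed
  have alice: "alice_legal X \<sigma> a n" if ok: "okB n" and pv: "prev_coll X \<sigma> a n = set (BL n)" for n
    unfolding alice_legal_def
  proof (intro allI conjI impI)
    fix B assume "B \<in> prev_coll X \<sigma> a n"
    then obtain i where i: "i < length (BL n)" "B = BL n ! i" using pv by (metis in_set_conv_nth)
    have dis: "distinct (BL n)" using ok unfolding okB_def by blast
    have aB: "a n B = X \<inter> ivl (ch n ! i)" unfolding a_def i(2) using amove_nth[OF dis i(1) lch] .
    have g: "goodJ t (cp n) i (e n) (ch n ! i)" using good[OF ok i(1)] .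
    then have "(cp n, i, Some (ch n ! i)) \<in> t" "fst (ch n ! i) < snd (ch n ! i)" unfolding goodJ_def by auto
    then have sub: "X \<inter> ivl (ch n ! i) \<subseteq> BL n ! i" unfolding t_def scodeof_def BL_def by auto
    show "a n B \<noteq> {}" unfolding aB using dense[of "ivl (ch n ! i)"] ivl_ne \<open>fst (ch n ! i) < snd (ch n ! i)\<close> by auto
    show "a n B \<subseteq> B" using sub aB i(2) by simp
    show "openin (top_of_set X) (a n B)" unfolding aB by (rule openin_open_Int) simp
  next
    fix B assume "B \<notin> prev_coll X \<sigma> a n"
    then have "B \<notin> set (BL n)" using pv by simp
    then show "a n B = {}" unfolding a_def by (rule amove_notin)
  qed
  have allok: "\<forall>k\<le>n. okB k \<and> prev_coll X \<sigma> a k = set (BL k)" for n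
  proof (induction n)
    case 0
    have "X \<noteq> {}" using dense[of UNIV] by auto
    then have "okB 0" unfolding okB_def BL0 by simp
    moreover have "prev_coll X \<sigma> a 0 = set (BL 0)" using prev by simp
    ultimately show ?case by simp
  next
    case (Suc n)
    have "\<forall>m\<le>n. alice_legal X \<sigma> a m" using Suc alice by blast
    then have bl: "bob_legal X \<sigma> a n" using win unfolding bob_winning_strategy_BMfin_def by blast
    then have fin: "finite (bob_coll \<sigma> a n)" unfolding bob_legal_def by blast
    then have sl: "set (BL (Suc n)) = bob_coll \<sigma> a n \<and> distinct (BL (Suc n))" unfolding BLS using Lof by blast
    have "okB (Suc n)" unfolding okB_def using sl bl unfolding bob_legal_def by blast
    moreover have "prev_coll X \<sigma> a (Suc n) = set (BL (Suc n))" using prev[of "Suc n"] fin by simp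
    ultimately show ?case using Suc by (metis le_Suc_eq)
  qed
  have AL: "\<forall>n. alice_legal X \<sigma> a n" using allok alice by blast
  have BLg: "bob_legal X \<sigma> a n" for n
    using win AL unfolding bob_winning_strategy_BMfin_def by blast
  have ne: "(\<Inter>n. \<Union> (bob_coll \<sigma> a n)) \<noteq> {}"
    using win AL unfolding bob_winning_strategy_BMfin_def by blast
  then obtain x where x: "\<And>n. x \<in> \<Union> (bob_coll \<sigma> a n)" by blast
  have xK: "x \<in> X \<and> x \<in> \<Union>{civl J | J. J \<in> set (ch n) \<and> e n \<notin> civl J}" for n
  proof -
    obtain B where B: "B \<in> bob_coll \<sigma> a n" "x \<in> B" using x[of n] by blast
    then have "x \<in> \<Union> (a n ` prev_coll X \<sigma> a n)" using BLg[of n] unfolding bob_legal_def by blast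
    then obtain B' where B': "B' \<in> set (BL n)" "x \<in> a n B'" using allok[of n] by blast
    then obtain i where i: "i < length (BL n)" "B' = BL n ! i" by (metis in_set_conv_nth)
    have ok: "okB n" using allok by blast
    have dis: "distinct (BL n)" using ok unfolding okB_def by blast
    have "a n B' = X \<inter> ivl (ch n ! i)" unfolding a_def i(2) using amove_nth[OF dis i(1) lch] .
    then have xi: "x \<in> X" "x \<in> civl (ch n ! i)" using B'(2) ivl_sub_civl by blast+
    have "e n \<notin> civl (ch n ! i)" using good[OF ok i(1)] unfolding goodJ_def by blast
    moreover have "ch n ! i \<in> set (ch n)" using i(1) lch by simp
    ultimately show ?thesis using xi by blast
  qed
  then have "x \<in> Kset t e" unfolding Kset_def ch_def cp_def by blast
  moreover have "x \<in> X" using xK by blast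
  ultimately show False using e by blast
qed

theorem proposition4p10:
  assumes "continuum_hypothesis"
  shows "\<exists>X :: real set. baire_space (top_of_set X) \<and>
           \<not> (\<exists>\<sigma>. bob_winning_strategy_BMfin X \<sigma>)"
proof -
  obtain R :: "(real\<times>real) set" where R1: "wf R" and R2: "\<forall>y z. y \<noteq> z \<longrightarrow> (y,z) \<in> R \<or> (z,y) \<in> R"
    and R3: "\<forall>y. countable {z. (z,y) \<in> R}"
    using omega1_order[OF assms] by metis
  obtain tk :: "real \<Rightarrow> task" where tk: "surj tk" using task_surj by metis
  obtain X :: "real set" where
    P1: "\<forall>V (W::nat \<Rightarrow> real set). open V \<and> V \<noteq> {} \<and> (\<forall>n. open (W n) \<and> closure (W n) = UNIV)
              \<longrightarrow> X \<inter> V \<inter> \<Inter>(range W) \<noteq> {}"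
    and P2: "\<forall>t. \<exists>e. X \<inter> Kset t e = {}"
    using construction[OF R1 R2 R3 tk] by metis
  have dense: "X \<inter> V \<noteq> {}" if "open V" "V \<noteq> {}" for V
    using P1[rule_format, of V "\<lambda>n. UNIV"] that by simp
  have "baire_space (top_of_set X)" using baire_part[OF P1] .
  moreover have "\<not> (\<exists>\<sigma>. bob_winning_strategy_BMfin X \<sigma>)"
    using game_part[OF dense P2] by blast
  ultimately show ?thesis by (intro exI[of _ X] conjI)
qed

end
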